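(* Let $K\in\{\mathbb R,\mathbb C,\mathbb H\}$ and let $(E,d)$ be a metric vector space over $K$ such that $d$ is $C_0$-translation invariant and $(C_1,C_2,C_3)$-lipschitz multiplicative. Let $d_0(x,y)=\int_{\mathbb U}d(ux,uy)\,d\mu(u)$, $\delta(x,y)=\lim_{n\to\infty}\frac1n d(nx,ny)$, $\delta_0(x,y)=\lim_{n\to\infty}\frac1n d_0(nx,ny)$. Let (i) $E_0=\{x\in E:\ \delta(ux,0)=0\text{ for all }u\in\mathbb U\}$; (ii) $E_1=\{x\in E:\delta_0(x,0)=0\}$; (iii) $E_2$ the maximal linear subspace of $E$ on which $d_0$ is bounded; (iv) $E_3$ the maximal linear subspace of $E$ on which $d$ is bounded. Then $E_0=E_1=E_2=E_3$.
   Context: A metric vector space is a topological vector space over $K$ whose topology is generated by the metric $d$. $\mathbb U=\{u\in K:|u|=1\}$, $\mu$ the right-invariant Haar probability measure on $\mathbb U$. $d$ is $C_0$-translation invariant if $d(x+z,y+z)\le d(x,y)+C_0$ for all $x,y,z$. $(C_1,C_2,C_3)$-lipschitz multiplicative ($C_1\ge1$, $C_2,C_3\ge0$) means $C_1^{-1}|\lambda|d(x,y)-C_2|\lambda|-C_3\le d(\lambda x,\lambda y)\le C_1|\lambda|d(x,y)+C_2|\lambda|+C_3$ for all $\lambda\in K$, $x,y\in E$. A distance $\rho$ is bounded on a set $A$ if $\sup_{x,y\in A}\rho(x,y)<\infty$. (Under these hypotheses the limits defining $\delta,\delta_0$ exist.) *)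

theory Defs
  imports "HOL-Probability.Probability"
begin

text \<open>The scalar field K is a type 'k of class real_normed_div_algebra and euclidean_space:
  a finite-dimensional associative real normed division algebra with Euclidean norm,
  i.e. (up to isomorphism) exactly R, C or H.\<close>

definition unit_sphere :: "'k::real_normed_div_algebra set" where
  "unit_sphere = {u. norm u = 1}"

definition left_vector_space :: "('k::real_normed_div_algebra \<Rightarrow> 'e::ab_group_add \<Rightarrow> 'e) \<Rightarrow> bool" where
  "left_vector_space sm \<longleftrightarrow>
     (\<forall>a x y. sm a (x + y) = sm a x + sm a y) \<and>
     (\<forall>a b x. sm (a + b) x = sm a x + sm b x) \<and>
     (\<forall>a b x. sm (a * b) x = sm a (sm b x)) \<and>
     (\<forall>x. sm 1 x = x)"

definition is_metric :: "('e \<Rightarrow> 'e \<Rightarrow> real) \<Rightarrow> bool" where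
  "is_metric d \<longleftrightarrow>
     (\<forall>x y. 0 \<le> d x y) \<and> (\<forall>x y. d x y = 0 \<longleftrightarrow> x = y) \<and>
     (\<forall>x y. d x y = d y x) \<and> (\<forall>x y z. d x z \<le> d x y + d y z)"

definition metric_vector_space ::
  "('k::real_normed_div_algebra \<Rightarrow> 'e::ab_group_add \<Rightarrow> 'e) \<Rightarrow> ('e \<Rightarrow> 'e \<Rightarrow> real) \<Rightarrow> bool" where
  "metric_vector_space sm d \<longleftrightarrow>
     left_vector_space sm \<and> is_metric d \<and>
     (\<forall>x y. \<forall>e>0. \<exists>r>0. \<forall>x' y'. d x x' < r \<and> d y y' < r \<longrightarrow> d (x + y) (x' + y') < e) \<and>
     (\<forall>a x. \<forall>e>0. \<exists>r>0. \<forall>a' x'. norm (a - a') < r \<and> d x x' < r \<longrightarrow> d (sm a x) (sm a' x') < e)"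

definition translation_invariant :: "real \<Rightarrow> ('e::ab_group_add \<Rightarrow> 'e \<Rightarrow> real) \<Rightarrow> bool" where
  "translation_invariant C0 d \<longleftrightarrow> (\<forall>x y z. d (x + z) (y + z) \<le> d x y + C0)"

definition lipschitz_multiplicative ::
  "real \<Rightarrow> real \<Rightarrow> real \<Rightarrow> ('k::real_normed_div_algebra \<Rightarrow> 'e \<Rightarrow> 'e) \<Rightarrow> ('e \<Rightarrow> 'e \<Rightarrow> real) \<Rightarrow> bool" where
  "lipschitz_multiplicative C1 C2 C3 sm d \<longleftrightarrow>
     C1 \<ge> 1 \<and> C2 \<ge> 0 \<and> C3 \<ge> 0 \<and>
     (\<forall>l x y. d x y * norm l / C1 - C2 * norm l - C3 \<le> d (sm l x) (sm l y) \<and>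
              d (sm l x) (sm l y) \<le> C1 * norm l * d x y + C2 * norm l + C3)"

definition right_haar_prob :: "'k::{real_normed_div_algebra, euclidean_space} measure \<Rightarrow> bool" where
  "right_haar_prob \<mu> \<longleftrightarrow>
     prob_space \<mu> \<and> space \<mu> = unit_sphere \<and>
     sets \<mu> = sets (restrict_space borel unit_sphere) \<and>
     (\<forall>v\<in>unit_sphere. distr \<mu> \<mu> (\<lambda>u. u * v) = \<mu>)"

definition avg_dist ::
  "'k::{real_normed_div_algebra, euclidean_space} measure \<Rightarrow> ('k \<Rightarrow> 'e \<Rightarrow> 'e) \<Rightarrow> ('e \<Rightarrow> 'e \<Rightarrow> real) \<Rightarrow> 'e \<Rightarrow> 'e \<Rightarrow> real" where
  "avg_dist \<mu> sm d x y = (\<integral>u. d (sm u x) (sm u y) \<partial>\<mu>)"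

definition asymp_dist ::
  "('k::real_normed_div_algebra \<Rightarrow> 'e \<Rightarrow> 'e) \<Rightarrow> ('e \<Rightarrow> 'e \<Rightarrow> real) \<Rightarrow> 'e \<Rightarrow> 'e \<Rightarrow> real" where
  "asymp_dist sm \<rho> x y = lim (\<lambda>n. \<rho> (sm (of_nat n) x) (sm (of_nat n) y) / real n)"

definition linear_subspace :: "('k::real_normed_div_algebra \<Rightarrow> 'e::ab_group_add \<Rightarrow> 'e) \<Rightarrow> 'e set \<Rightarrow> bool" where
  "linear_subspace sm S \<longleftrightarrow> 0 \<in> S \<and> (\<forall>x\<in>S. \<forall>y\<in>S. x + y \<in> S) \<and> (\<forall>a. \<forall>x\<in>S. sm a x \<in> S)"

definition dist_bounded_on :: "('e \<Rightarrow> 'e \<Rightarrow> real) \<Rightarrow> 'e set \<Rightarrow> bool" where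
  "dist_bounded_on \<rho> A \<longleftrightarrow> (\<exists>B. \<forall>x\<in>A. \<forall>y\<in>A. \<rho> x y \<le> B)"

definition max_bounded_subspace ::
  "('k::real_normed_div_algebra \<Rightarrow> 'e::ab_group_add \<Rightarrow> 'e) \<Rightarrow> ('e \<Rightarrow> 'e \<Rightarrow> real) \<Rightarrow> 'e set \<Rightarrow> bool" where
  "max_bounded_subspace sm \<rho> S \<longleftrightarrow>
     linear_subspace sm S \<and> dist_bounded_on \<rho> S \<and>
     (\<forall>T. linear_subspace sm T \<and> dist_bounded_on \<rho> T \<longrightarrow> T \<subseteq> S)"

end

theory Submission
  imports Defs
begin

lemma fekete:
  fixes a :: "nat \<Rightarrow> real"
  assumes sub: "\<And>m n. a (m+n) \<le> a m + a n" and nn: "\<And>n. 0 \<le> a n"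
  shows "convergent (\<lambda>n. a n / real n)"
proof -
  define S where "S = (\<lambda>n. a n / real n) ` {1..}"
  define L where "L = Inf S"
  have bdd: "bdd_below S" unfolding S_def by (rule bdd_belowI[of _ 0]) (auto simp: nn)
  have ne: "S \<noteq> {}" unfolding S_def by auto
  have low: "L \<le> a n / n" if "n \<ge> 1" for n
    unfolding L_def using that bdd by (intro cInf_lower) (auto simp: S_def)
  have mult: "a (q*k + r) \<le> real q * a k + a r" for q k r
  proof (induction q)
    case 0 then show ?case by simp
  next
    case (Suc q)
    have "a (Suc q * k + r) = a (k + (q*k + r))" by (simp add: add.assoc)
    also have "\<dots> \<le> a k + a (q*k+r)" by (rule sub)
    finally show ?case using Suc by (simp add: algebra_simps)
  qed
  have "(\<lambda>n. a n / real n) \<longlonglongrightarrow> L"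
  proof (rule LIMSEQ_I)
    fix e :: real assume e: "0 < e"
    have "L < L + e/2" using e by simp
    then obtain s where "s \<in> S" "s < L + e/2" unfolding L_def using cInf_less_iff[OF ne bdd] by blast
    then obtain k where k: "k \<ge> 1" and ak: "a k / k < L + e/2" unfolding S_def by auto
    define M where "M = Max (a ` {..<k})"
    have M: "a r \<le> M" if "r < k" for r unfolding M_def using that by (intro Max_ge) auto
    have M0: "0 \<le> M" using M[of 0] k nn[of 0] by auto
    obtain N :: nat where N: "2 * M / e < real N" using reals_Archimedean2 by blast
    have "norm (a n / real n - L) < e" if n: "n \<ge> max 1 N" for n
    proof -
      define q where "q = n div k"
      define r where "r = n mod k"
      have nqr: "n = q*k + r" unfolding q_def r_def by simp
      have rk: "r < k" unfolding r_def using k by simp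
      have n1: "real n \<ge> 1" using n by simp
      have nN: "real n \<ge> real N" using n by simp
      have "a n \<le> real q * a k + M" using mult[of q k r] M[OF rk] nqr by simp
      have qk: "real q * real k \<le> real n" using nqr by (metis of_nat_le_iff of_nat_mult le_add1)
      have "real q * a k = (real q * real k) * (a k / real k)" using k by simp
      also have "\<dots> \<le> real n * (a k / real k)" using qk nn[of k] by (intro mult_right_mono) auto
      finally have "real q * a k / real n \<le> a k / real k" using n1 by (simp add: field_simps)
      moreover have "M / real n < e / 2"
      proof -
        have "2 * M < e * real N" using N e by (simp add: field_simps)
        also have "\<dots> \<le> e * real n" using nN e by simp
        finally show ?thesis using n1 by (simp add: field_simps)
      qed
      moreover have "a n / real n \<le> real q * a k / real n + M / real n"
        using \<open>a n \<le> real q * a k + M\<close> n1 by (simp add: field_simps)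
      ultimately have "a n / real n < L + e" using ak by linarith
      moreover have "L \<le> a n / n" using low n by simp
      ultimately show ?thesis by simp
    qed
    then show "\<exists>no. \<forall>n\<ge>no. norm (a n / real n - L) < e" by blast
  qed
  then show ?thesis by (auto simp: convergent_def)
qed

lemma fekete2:
  fixes a :: "nat \<Rightarrow> real"
  assumes sub: "\<And>m n. a (m+n) \<le> a m + C + a n" and nn: "\<And>n. 0 \<le> a n" and C: "0 \<le> C"
  shows "convergent (\<lambda>n. a n / real n)"
proof -
  have "convergent (\<lambda>n. (a n + C) / real n)"
    by (rule fekete) (use sub nn C in \<open>auto simp: algebra_simps\<close>)
  then obtain L where L: "(\<lambda>n. (a n + C) / real n) \<longlonglongrightarrow> L" by (auto simp: convergent_def)
  have "(\<lambda>n. (a n + C) / real n - C / real n) \<longlonglongrightarrow> L - 0"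
    by (intro tendsto_diff L lim_const_over_n)
  moreover have "(\<lambda>n. (a n + C) / real n - C / real n) = (\<lambda>n. a n / real n)"
    by (simp add: fun_eq_iff add_divide_distrib)
  ultimately show ?thesis by (auto simp: convergent_def)
qed

locale pv =
  fixes sm :: "'k::{real_normed_div_algebra, euclidean_space} \<Rightarrow> 'e::ab_group_add \<Rightarrow> 'e"
    and d :: "'e \<Rightarrow> 'e \<Rightarrow> real"
    and \<mu> :: "'k measure"
    and C0 C1 C2 C3 :: real
  assumes mvs: "metric_vector_space sm d"
    and ti: "translation_invariant C0 d"
    and lm: "lipschitz_multiplicative C1 C2 C3 sm d"
    and rh: "right_haar_prob \<mu>"
begin

lemma lv: "left_vector_space sm" using mvs by (simp add: metric_vector_space_def)
lemma met: "is_metric d" using mvs by (simp add: metric_vector_space_def)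

lemma sm_add: "sm a (x + y) = sm a x + sm a y" using lv by (simp add: left_vector_space_def)
lemma sm_add2: "sm (a + b) x = sm a x + sm b x" using lv by (simp add: left_vector_space_def)
lemma sm_mult: "sm (a * b) x = sm a (sm b x)" using lv by (simp add: left_vector_space_def)
lemma sm_one[simp]: "sm 1 x = x" using lv by (simp add: left_vector_space_def)
lemma sm_zero[simp]: "sm a 0 = 0"
  using sm_add[of a 0 0] by simp
lemma sm_zero2[simp]: "sm 0 x = 0"
  using sm_add2[of 0 0 x] by simp

lemma d_nn: "0 \<le> d x y" using met by (simp add: is_metric_def)
lemma d_refl[simp]: "d x x = 0" using met by (simp add: is_metric_def)
lemma d_sym: "d x y = d y x" using met by (simp add: is_metric_def)
lemma d_tri: "d x z \<le> d x y + d y z" using met by (simp add: is_metric_def)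

lemma d_ti: "d (x + z) (y + z) \<le> d x y + C0" using ti by (simp add: translation_invariant_def)
lemma C0: "0 \<le> C0" using d_ti[of 0 0 0] by simp
lemma C1: "1 \<le> C1" using lm by (simp add: lipschitz_multiplicative_def)
lemma C2: "0 \<le> C2" using lm by (simp add: lipschitz_multiplicative_def)
lemma C3: "0 \<le> C3" using lm by (simp add: lipschitz_multiplicative_def)
lemma lip_low: "d x y * norm l / C1 - C2 * norm l - C3 \<le> d (sm l x) (sm l y)"
  using lm by (simp add: lipschitz_multiplicative_def)
lemma lip_up: "d (sm l x) (sm l y) \<le> C1 * norm l * d x y + C2 * norm l + C3"
  using lm by (simp add: lipschitz_multiplicative_def)

lemma low0: "norm l * (d y 0 / C1 - C2) - C3 \<le> d (sm l y) 0"
  using lip_low[of y 0 l] by (simp add: algebra_simps)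

lemma subadd: "d (p + q) 0 \<le> d p 0 + C0 + d q 0"
proof -
  have "d (p + q) 0 \<le> d (p + q) (0 + q) + d q 0" using d_tri[of "p+q" 0 q] by simp
  also have "\<dots> \<le> d p 0 + C0 + d q 0" using d_ti[of p q 0] by simp
  finally show ?thesis .
qed

definition "K = C1 * C2"
lemma K0: "0 \<le> K" using C1 C2 by (simp add: K_def)

definition "B = {x. \<forall>a. d (sm a x) 0 \<le> K}"

lemma notB:
  assumes "x \<notin> B"
  obtains \<kappa> where "\<kappa> > 0" "\<And>a. norm a * \<kappa> - C3 \<le> d (sm a x) 0"
proof -
  obtain c where c: "d (sm c x) 0 > K" using assms by (auto simp: B_def not_le)
  have c0: "c \<noteq> 0" using c K0 by auto
  define \<kappa> where "\<kappa> = (d (sm c x) 0 / C1 - C2) / norm c"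
  have "d (sm c x) 0 / C1 > C2" using c C1 by (simp add: K_def field_simps)
  then have kp: "\<kappa> > 0" using c0 by (simp add: \<kappa>_def)
  have "norm a * \<kappa> - C3 \<le> d (sm a x) 0" for a
  proof -
    have e: "sm a x = sm (a * inverse c) (sm c x)"
      using c0 by (simp add: sm_mult[symmetric] mult.assoc)
    have "norm (a * inverse c) = norm a / norm c" by (simp add: norm_mult norm_inverse divide_inverse)
    then have "norm a * \<kappa> = norm (a * inverse c) * (d (sm c x) 0 / C1 - C2)"
      by (simp add: \<kappa>_def)
    then show ?thesis using low0[of "a * inverse c" "sm c x"] e by simp
  qed
  note H = this
  show ?thesis using that[OF kp H] .
qed

lemma big_false:
  assumes "\<kappa> > 0" "\<And>a::'k. norm a * \<kappa> - C3 \<le> M" shows False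
proof -
  define r where "r = (\<bar>M\<bar> + C3 + 1) / \<kappa>"
  have "norm (of_real r :: 'k) * \<kappa> - C3 \<le> M" by (rule assms(2))
  moreover have "norm (of_real r :: 'k) * \<kappa> = \<bar>r\<bar> * \<kappa>" by (simp only: norm_of_real)
  moreover have "\<bar>r\<bar> = r" using assms(1) C3 by (simp add: r_def)
  moreover have "r * \<kappa> = \<bar>M\<bar> + C3 + 1" using assms(1) by (simp add: r_def)
  ultimately show False by linarith
qed

lemma boundedB: assumes "\<And>a. d (sm a x) 0 \<le> M" shows "x \<in> B"
proof (rule ccontr)
  assume "x \<notin> B"
  obtain \<kappa> where k1: "\<kappa> > 0" and k2: "\<And>a. norm a * \<kappa> - C3 \<le> d (sm a x) 0" by (rule notB[OF \<open>x \<notin> B\<close>]) blast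
  have "norm a * \<kappa> - C3 \<le> M" for a :: 'k using k2[of a] assms[of a] by linarith
  then show False using big_false k1 by blast
qed

lemma B_sub: "linear_subspace sm B"
  unfolding linear_subspace_def
proof (intro conjI ballI allI)
  show "0 \<in> B" using K0 by (simp add: B_def)
next
  fix x y assume x: "x \<in> B" and y: "y \<in> B"
  show "x + y \<in> B"
  proof (rule boundedB)
    fix a
    have "d (sm a (x + y)) 0 \<le> d (sm a x) 0 + C0 + d (sm a y) 0" using subadd by (simp add: sm_add)
    also have "\<dots> \<le> K + C0 + K" using x y unfolding B_def by (smt (verit) mem_Collect_eq)
    finally show "d (sm a (x + y)) 0 \<le> K + C0 + K" .
  qed
next
  fix a x assume "x \<in> B" then show "sm a x \<in> B" by (simp add: B_def sm_mult[symmetric])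
qed

lemma B_le: "x \<in> B \<Longrightarrow> d x 0 \<le> K" using sm_one unfolding B_def by (metis mem_Collect_eq)

lemma B_bdd: "dist_bounded_on d B"
  unfolding dist_bounded_on_def
proof (intro exI ballI)
  fix x y assume "x \<in> B" "y \<in> B"
  then show "d x y \<le> K + K" using d_tri[of x y 0] d_sym[of 0 y] B_le[of x] B_le[of y] by linarith
qed

lemma B_max: "max_bounded_subspace sm d B"
  unfolding max_bounded_subspace_def
proof (intro conjI allI impI B_sub B_bdd subsetI)
  fix T x assume T: "linear_subspace sm T \<and> dist_bounded_on d T" and x: "x \<in> T"
  then obtain M where M: "\<forall>x\<in>T. \<forall>y\<in>T. d x y \<le> M" by (auto simp: dist_bounded_on_def)
  show "x \<in> B"
    by (rule boundedB[of _ M]) (use T x M in \<open>auto simp: linear_subspace_def\<close>)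
qed

lemma ps: "prob_space \<mu>" using rh by (simp add: right_haar_prob_def)
lemma sp: "space \<mu> = unit_sphere" using rh by (simp add: right_haar_prob_def)
lemma st: "sets \<mu> = sets (restrict_space borel unit_sphere)" using rh by (simp add: right_haar_prob_def)

lemma cont: "continuous_on A (\<lambda>u. d (sm u x) (sm u y))"
  unfolding continuous_on_iff
proof (intro ballI allI impI)
  fix a e assume a: "a \<in> A" and e: "(0::real) < e"
  have sc: "\<exists>r>0. \<forall>a'. norm (a - a') < r \<longrightarrow> d (sm a z) (sm a' z) < e/2" for z
  proof -
    obtain r where r: "r > 0" "\<forall>a' x'. norm (a - a') < r \<and> d z x' < r \<longrightarrow> d (sm a z) (sm a' x') < e/2"
      using mvs e unfolding metric_vector_space_def by (meson half_gt_zero)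
    then show ?thesis by (intro exI[of _ r]) auto
  qed
  obtain r1 where r1: "r1 > 0" "\<forall>a'. norm (a - a') < r1 \<longrightarrow> d (sm a x) (sm a' x) < e/2" using sc by blast
  obtain r2 where r2: "r2 > 0" "\<forall>a'. norm (a - a') < r2 \<longrightarrow> d (sm a y) (sm a' y) < e/2" using sc by blast
  show "\<exists>r>0. \<forall>a'\<in>A. dist a' a < r \<longrightarrow> dist (d (sm a' x) (sm a' y)) (d (sm a x) (sm a y)) < e"
  proof (intro exI[of _ "min r1 r2"] conjI ballI impI)
    show "0 < min r1 r2" using r1 r2 by simp
    fix a' assume "a' \<in> A" "dist a' a < min r1 r2"
    then have n: "norm (a - a') < r1" "norm (a - a') < r2" by (auto simp: dist_norm norm_minus_commute)
    have h1: "d (sm a x) (sm a' x) < e/2" using r1 n by blast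
    have h2: "d (sm a y) (sm a' y) < e/2" using r2 n by blast
    have t1: "d (sm a' x) (sm a' y) \<le> d (sm a' x) (sm a x) + d (sm a x) (sm a y) + d (sm a y) (sm a' y)"
      using d_tri[of "sm a' x" "sm a' y" "sm a x"] d_tri[of "sm a x" "sm a' y" "sm a y"] by linarith
    have t2: "d (sm a x) (sm a y) \<le> d (sm a x) (sm a' x) + d (sm a' x) (sm a' y) + d (sm a' y) (sm a y)"
      using d_tri[of "sm a x" "sm a y" "sm a' x"] d_tri[of "sm a' x" "sm a y" "sm a' y"] by linarith
    show "dist (d (sm a' x) (sm a' y)) (d (sm a x) (sm a y)) < e"
      using t1 t2 h1 h2 d_sym[of "sm a' x" "sm a x"] d_sym[of "sm a' y" "sm a y"]
      by (simp add: dist_real_def abs_less_iff)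
  qed
qed

lemma integ: "integrable \<mu> (\<lambda>u. d (sm u x) (sm u y))"
proof -
  interpret prob_space \<mu> by (rule ps)
  have m: "(\<lambda>u. d (sm u x) (sm u y)) \<in> borel_measurable \<mu>"
    by (subst measurable_cong_sets[OF st refl]) (rule borel_measurable_continuous_on_restrict[OF cont])
  show ?thesis
  proof (rule integrable_const_bound[OF _ m])
    show "AE u in \<mu>. norm (d (sm u x) (sm u y)) \<le> C1 * d x y + C2 + C3"
    proof (rule AE_I2)
      fix u assume "u \<in> space \<mu>"
      then have "norm u = 1" by (simp add: sp unit_sphere_def)
      then show "norm (d (sm u x) (sm u y)) \<le> C1 * d x y + C2 + C3"
        using lip_up[of u x y] d_nn[of "sm u x" "sm u y"] by simp
    qed
  qed
qed

definition "D0 = avg_dist \<mu> sm d"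

lemma D0_lowB:
  assumes "\<And>u. norm u = 1 \<Longrightarrow> c \<le> d (sm u x) (sm u y)" shows "c \<le> D0 x y"
proof -
  interpret prob_space \<mu> by (rule ps)
  show ?thesis unfolding D0_def avg_dist_def
    by (rule integral_ge_const[OF integ]) (auto intro!: AE_I2 assms simp: sp unit_sphere_def)
qed

lemma D0_upB:
  assumes "\<And>u. norm u = 1 \<Longrightarrow> d (sm u x) (sm u y) \<le> c" shows "D0 x y \<le> c"
proof -
  interpret prob_space \<mu> by (rule ps)
  show ?thesis unfolding D0_def avg_dist_def
    by (rule integral_le_const[OF integ]) (auto intro!: AE_I2 assms simp: sp unit_sphere_def)
qed

lemma D0_nn: "0 \<le> D0 x y" by (rule D0_lowB) (rule d_nn)

lemma D0_subadd: "D0 (p + q) 0 \<le> D0 p 0 + C0 + D0 q 0"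
proof -
  interpret prob_space \<mu> by (rule ps)
  have "D0 (p + q) 0 = (\<integral>u. d (sm u p + sm u q) 0 \<partial>\<mu>)"
    by (simp add: D0_def avg_dist_def sm_add)
  also have "\<dots> \<le> (\<integral>u. d (sm u p) (sm u 0) + C0 + d (sm u q) (sm u 0) \<partial>\<mu>)"
    using integ[of "p+q" 0] Bochner_Integration.integrable_add[OF Bochner_Integration.integrable_add[OF integ[of p 0] integrable_const[of C0]] integ[of q 0]]
    by (intro integral_mono) (auto simp: sm_add subadd)
  also have "\<dots> = D0 p 0 + C0 + D0 q 0"
    unfolding D0_def avg_dist_def using integ[of p 0] integ[of q 0]
    by (simp add: prob_space)
  finally show ?thesis .
qed


lemma sm_nat_add: "sm (of_nat (m + n)) x = sm (of_nat m) x + sm (of_nat n) x"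
  by (simp add: sm_add2)

lemma lim_zero:
  fixes f :: "nat \<Rightarrow> real"
  assumes "\<And>n. 0 \<le> f n" "\<And>n. f n \<le> K" shows "lim (\<lambda>n. f n / real n) = 0"
proof (rule limI)
  show "(\<lambda>n. f n / real n) \<longlonglongrightarrow> 0"
  proof (rule tendsto_sandwich[of "\<lambda>_. 0" _ sequentially "\<lambda>n. K / real n"])
    show "\<forall>\<^sub>F n in sequentially. 0 \<le> f n / real n" using assms by simp
    show "\<forall>\<^sub>F n in sequentially. f n / real n \<le> K / real n"
      using assms by (intro always_eventually allI divide_right_mono) auto
    show "(\<lambda>n. K / real n) \<longlonglongrightarrow> 0" by (rule lim_const_over_n)
  qed simp
qed

lemma lim_pos:
  fixes f :: "nat \<Rightarrow> real"
  assumes conv: "convergent (\<lambda>n. f n / real n)" and lo: "\<And>n. real n * \<kappa> - C3 \<le> f n" and kp: "\<kappa> > 0"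
  shows "lim (\<lambda>n. f n / real n) \<noteq> 0"
proof -
  have L: "(\<lambda>n. f n / real n) \<longlonglongrightarrow> lim (\<lambda>n. f n / real n)" using conv by (simp add: convergent_LIMSEQ_iff)
  have g: "(\<lambda>n. \<kappa> - C3 / real n) \<longlonglongrightarrow> \<kappa> - 0" by (intro tendsto_diff tendsto_const lim_const_over_n)
  have "\<kappa> - C3 / real n \<le> f n / real n" if "n \<ge> 1" for n
  proof -
    have "real n \<ge> 1" using that by simp
    then have "\<kappa> - C3 / real n = (real n * \<kappa> - C3) / real n" by (simp add: field_simps)
    also have "\<dots> \<le> f n / real n" using lo[of n] \<open>real n \<ge> 1\<close> by (intro divide_right_mono) auto
    finally show ?thesis .
  qed
  then have "\<kappa> - 0 \<le> lim (\<lambda>n. f n / real n)" by (intro LIMSEQ_le[OF g L]) blast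
  then show ?thesis using kp by simp
qed

lemma B_delta: "x \<in> B \<Longrightarrow> asymp_dist sm d x 0 = 0"
  unfolding asymp_dist_def
  by (rule lim_zero) (auto simp: d_nn B_def)

lemma delta_B: assumes "asymp_dist sm d x 0 = 0" shows "x \<in> B"
proof (rule ccontr)
  assume "x \<notin> B"
  obtain \<kappa> where k1: "\<kappa> > 0" and k2: "\<And>a. norm a * \<kappa> - C3 \<le> d (sm a x) 0" by (rule notB[OF \<open>x \<notin> B\<close>]) blast
  have conv: "convergent (\<lambda>n. d (sm (of_nat n) x) 0 / real n)"
    by (rule fekete2[OF _ d_nn C0]) (unfold sm_nat_add, rule subadd)
  have "lim (\<lambda>n. d (sm (of_nat n) x) 0 / real n) \<noteq> 0"
    by (rule lim_pos[OF conv _ k1]) (use k2 in \<open>metis norm_of_nat\<close>)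
  then show False using assms by (simp add: asymp_dist_def)
qed

lemma D0_low: assumes "\<And>a. norm a * \<kappa> - C3 \<le> d (sm a x) 0" shows "norm a * \<kappa> - C3 \<le> D0 (sm a x) 0"
proof (rule D0_lowB)
  fix u :: 'k assume "norm u = 1"
  then show "norm a * \<kappa> - C3 \<le> d (sm u (sm a x)) (sm u 0)"
    using assms[of "u * a"] by (simp add: sm_mult norm_mult)
qed

lemma B_delta0: "x \<in> B \<Longrightarrow> asymp_dist sm D0 x 0 = 0"
  unfolding asymp_dist_def
proof (rule lim_zero)
  fix n assume x: "x \<in> B"
  show "0 \<le> D0 (sm (of_nat n) x) (sm (of_nat n) 0)" by (rule D0_nn)
  show "D0 (sm (of_nat n) x) (sm (of_nat n) 0) \<le> K"
    by (rule D0_upB) (use x in \<open>simp add: B_def sm_mult[symmetric]\<close>)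
qed

lemma delta0_B: assumes "asymp_dist sm D0 x 0 = 0" shows "x \<in> B"
proof (rule ccontr)
  assume "x \<notin> B"
  obtain \<kappa> where k1: "\<kappa> > 0" and k2: "\<And>a. norm a * \<kappa> - C3 \<le> d (sm a x) 0" by (rule notB[OF \<open>x \<notin> B\<close>]) blast
  have conv: "convergent (\<lambda>n. D0 (sm (of_nat n) x) 0 / real n)"
    by (rule fekete2[OF _ D0_nn C0]) (unfold sm_nat_add, rule D0_subadd)
  have "lim (\<lambda>n. D0 (sm (of_nat n) x) 0 / real n) \<noteq> 0"
    by (rule lim_pos[OF conv _ k1]) (use D0_low[OF k2] in \<open>metis norm_of_nat\<close>)
  then show False using assms by (simp add: asymp_dist_def)
qed

lemma B_bdd0: "dist_bounded_on D0 B"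
  unfolding dist_bounded_on_def
proof (intro exI ballI)
  fix x y assume x: "x \<in> B" and y: "y \<in> B"
  show "D0 x y \<le> K + K"
  proof (rule D0_upB)
    fix u :: 'k
    have "sm u x \<in> B" "sm u y \<in> B" using x y B_sub by (auto simp: linear_subspace_def)
    then show "d (sm u x) (sm u y) \<le> K + K"
      using d_tri[of "sm u x" "sm u y" 0] d_sym[of 0 "sm u y"] B_le[of "sm u x"] B_le[of "sm u y"] by linarith
  qed
qed

lemma B_max0: "max_bounded_subspace sm D0 B"
  unfolding max_bounded_subspace_def
proof (intro conjI allI impI B_sub B_bdd0 subsetI)
  fix T x assume T: "linear_subspace sm T \<and> dist_bounded_on D0 T" and x: "x \<in> T"
  then obtain M where M: "\<forall>x\<in>T. \<forall>y\<in>T. D0 x y \<le> M" by (auto simp: dist_bounded_on_def)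
  show "x \<in> B"
  proof (rule ccontr)
    assume "x \<notin> B"
    obtain \<kappa> where k1: "\<kappa> > 0" and k2: "\<And>a. norm a * \<kappa> - C3 \<le> d (sm a x) 0" by (rule notB[OF \<open>x \<notin> B\<close>]) blast
    have "norm a * \<kappa> - C3 \<le> M" for a :: 'k
    proof -
      have "sm a x \<in> T" "0 \<in> T" using T x by (auto simp: linear_subspace_def)
      then show ?thesis using D0_low[OF k2, of a] M by fastforce
    qed
    then show False using big_false k1 by blast
  qed
qed

end


theorem proposition4:
  fixes sm :: "'k::{real_normed_div_algebra, euclidean_space} \<Rightarrow> 'e::ab_group_add \<Rightarrow> 'e"
    and d :: "'e \<Rightarrow> 'e \<Rightarrow> real"
    and \<mu> :: "'k measure"
    and C0 C1 C2 C3 :: real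
  assumes "metric_vector_space sm d"
    and "translation_invariant C0 d"
    and "lipschitz_multiplicative C1 C2 C3 sm d"
    and "right_haar_prob \<mu>"
  defines "d0 \<equiv> avg_dist \<mu> sm d"
    and "\<delta> \<equiv> asymp_dist sm d"
    and "\<delta>0 \<equiv> asymp_dist sm (avg_dist \<mu> sm d)"
  defines "E0 \<equiv> {x. \<forall>u\<in>unit_sphere. \<delta> (sm u x) 0 = 0}"
    and "E1 \<equiv> {x. \<delta>0 x 0 = 0}"
  shows "E0 = E1 \<and> max_bounded_subspace sm d0 E1 \<and> max_bounded_subspace sm d E1"
  proof -
  interpret pv sm d \<mu> C0 C1 C2 C3
    by (rule pv.intro[OF assms(1) assms(2) assms(3) assms(4)])
  have DD: "d0 = D0" by (simp add: d0_def D0_def)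
  have E0B: "E0 = B"
  proof (intro set_eqI iffI)
    fix x assume "x \<in> E0"
    moreover have "(1::'k) \<in> unit_sphere" by (simp add: unit_sphere_def)
    ultimately have "asymp_dist sm d (sm 1 x) 0 = 0" unfolding E0_def \<delta>_def by blast
    then show "x \<in> B" by (intro delta_B) simp
  next
    fix x assume x: "x \<in> B"
    have "sm u x \<in> B" for u using x B_sub by (auto simp: linear_subspace_def)
    then show "x \<in> E0" by (simp add: E0_def \<delta>_def B_delta)
  qed
  have E1B: "E1 = B"
    using B_delta0 delta0_B by (auto simp: E1_def \<delta>0_def D0_def)
  show ?thesis using E0B E1B B_max B_max0 DD by simp
qed

end
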